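(* Let $q$ be a set of operations on a set $\Omega$ and write $\sim$ for $\sim_q$. (1) A relation $R\subseteq\Omega^k$ is definable in $\mathscr L^-_{\infty\infty}(q)$ with parameters from $\Omega$ if and only if $R$ is invariant under $\sim$. (2) For every quantifier $Q$ on $\Omega$, $Q^{\upharpoonright q}=\cup(Q/\!\sim)$.
   Context: A set of operations on $\Omega$ is a set of finitary relations and quantifiers (subsets of $\mathcal P(\Omega^{k_1})\times\cdots\times\mathcal P(\Omega^{k_l})$) on $\Omega$; $\mathscr L^-_{\infty\infty}(q)$ is the corresponding equality-free infinitary logic with Lindström quantifiers. $a\sim_q b$ iff for every formula $\phi(x,\bar y)$ of $\mathscr L^-_{\infty\infty}(q)$ and every tuple $\bar c$ from $\Omega$, $\phi(a,\bar c)\iff\phi(b,\bar c)$ in $(\Omega,q)$. $R$ is invariant under $\sim$ if $\bar a\sim\bar b$ (coordinatewise) implies ($\bar a\in R\iff\bar b\in R$). $Q^{\upharpoonright q}$ is the set of tuples $(R_1,\dots,R_l)\in Q$ with each $R_i$ definable in $\mathscr L^-_{\infty\infty}(q)$ with parameters from $\Omega$. For an equivalence relation $\sim$ with classes $[a]$: for $R'\subseteq(\Omega/\!\sim)^k$, $\cup R'=\{(a_1,\dots,a_k)\in\Omega^k: ([a_1],\dots,[a_k])\in R'\}$; for a quantifier $Q$ on $\Omega$, $Q/\!\sim=\{(R'_1,\dots,R'_l): (\cup R'_1,\dots,\cup R'_l)\in Q\}$ (a quantifier on $\Omega/\!\sim$); for a quantifier $Q'$ on $\Omega/\!\sim$,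 $\cup Q'=\{(\cup R'_1,\dots,\cup R'_l): (R'_1,\dots,R'_l)\in Q'\}$. *)

theory Defs
  imports Main
begin

text \<open>
  The universe Omega is the whole type 'a.  Tuples in Omega^k are lists of length k.
  An operation is either a k-ary relation or a quantifier of type (k_1,...,k_l),
  i.e. a set of l-tuples (lists) of relations R_i with R_i a subset of Omega^(k_i).
\<close>

datatype 'a oper = Rel nat "'a list set" | Quant "nat list" "'a list set list set"

definition is_quant :: "nat list \<Rightarrow> 'b list set list set \<Rightarrow> bool" where
  "is_quant ks Q \<longleftrightarrow> (\<forall>Rs\<in>Q. length Rs = length ks \<and>
      (\<forall>i<length ks. \<forall>t\<in>Rs ! i. length t = ks ! i))"

definition upd :: "('v \<Rightarrow> 'a) \<Rightarrow> 'v list \<Rightarrow> 'a list \<Rightarrow> 'v \<Rightarrow> 'a" where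
  "upd s xs as = (\<lambda>v. case map_of (zip xs as) v of Some a \<Rightarrow> a | None \<Rightarrow> s v)"

text \<open>
  Semantic presentation of the equality-free infinitary logic L^-_{infinity infinity}(q)
  with Lindstroem quantifiers, with variables of type 'v and with constants
  (parameters) for every element of Omega.  Terms are variables (Inl) or constants (Inr).
  A formula is identified with the set of assignments satisfying it; lformula q A
  says that A is the meaning of some formula.
\<close>
definition tval :: "('v \<Rightarrow> 'a) \<Rightarrow> 'v + 'a \<Rightarrow> 'a" where
  "tval s t = (case t of Inl v \<Rightarrow> s v | Inr a \<Rightarrow> a)"

inductive lformula :: "'a oper set \<Rightarrow> ('v \<Rightarrow> 'a) set \<Rightarrow> bool" for q where
  atom: "Rel k R \<in> q \<Longrightarrow> length ts = k \<Longrightarrow> lformula q {s. map (tval s) ts \<in> R}"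
| neg: "lformula q A \<Longrightarrow> lformula q (- A)"
| conj: "(\<And>A. A \<in> F \<Longrightarrow> lformula q A) \<Longrightarrow> lformula q (\<Inter> F)"
| ex: "lformula q A \<Longrightarrow>
     lformula q {s. \<exists>t. (\<forall>v. v \<notin> X \<longrightarrow> t v = s v) \<and> t \<in> A}"
| quant: "Quant ks Q \<in> q \<Longrightarrow> length xss = length ks \<Longrightarrow> length As = length ks \<Longrightarrow>
     (\<And>i. i < length ks \<Longrightarrow> distinct (xss ! i) \<and> length (xss ! i) = ks ! i) \<Longrightarrow>
     (\<And>i. i < length ks \<Longrightarrow> lformula q (As ! i)) \<Longrightarrow>
     lformula q {s. map (\<lambda>i. {as. length as = ks ! i \<and> upd s (xss ! i) as \<in> As ! i})
                        [0..<length ks] \<in> Q}"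

text \<open>a \<sim>_q b: no formula phi(x, parameters) distinguishes a from b.
  The assignment s supplies the parameters for the remaining free variables.\<close>
definition lsim :: "'v itself \<Rightarrow> 'a oper set \<Rightarrow> 'a \<Rightarrow> 'a \<Rightarrow> bool" where
  "lsim (_::'v itself) q a b \<longleftrightarrow>
     (\<forall>(A::('v \<Rightarrow> 'a) set) s x. lformula q A \<longrightarrow> (s(x := a) \<in> A \<longleftrightarrow> s(x := b) \<in> A))"

definition ldefinable :: "'v itself \<Rightarrow> 'a oper set \<Rightarrow> nat \<Rightarrow> 'a list set \<Rightarrow> bool" where
  "ldefinable (_::'v itself) q k R \<longleftrightarrow>
     (\<exists>(A::('v \<Rightarrow> 'a) set) xs s. lformula q A \<and> distinct xs \<and> length xs = k \<and>
        R = {as. length as = k \<and> upd s xs as \<in> A})"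

definition invariant :: "('a \<Rightarrow> 'a \<Rightarrow> bool) \<Rightarrow> nat \<Rightarrow> 'a list set \<Rightarrow> bool" where
  "invariant sim k R \<longleftrightarrow>
     (\<forall>as bs. length as = k \<longrightarrow> list_all2 sim as bs \<longrightarrow> (as \<in> R \<longleftrightarrow> bs \<in> R))"

definition restrict_def :: "'v itself \<Rightarrow> 'a oper set \<Rightarrow> nat list \<Rightarrow> 'a list set list set
     \<Rightarrow> 'a list set list set" where
  "restrict_def V q ks Q = {Rs \<in> Q. \<forall>i<length ks. ldefinable V q (ks ! i) (Rs ! i)}"

text \<open>Quotients: classes of an equivalence relation are represented as sets;
  Omega/sim is the set of classes.\<close>
definition cls :: "('a \<Rightarrow> 'a \<Rightarrow> bool) \<Rightarrow> 'a \<Rightarrow> 'a set" where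
  "cls sim a = {b. sim a b}"

definition quot :: "('a \<Rightarrow> 'a \<Rightarrow> bool) \<Rightarrow> 'a set set" where
  "quot sim = range (cls sim)"

definition cup_rel :: "('a \<Rightarrow> 'a \<Rightarrow> bool) \<Rightarrow> 'a set list set \<Rightarrow> 'a list set" where
  "cup_rel sim R' = {as. map (cls sim) as \<in> R'}"

definition quot_quant :: "('a \<Rightarrow> 'a \<Rightarrow> bool) \<Rightarrow> nat list \<Rightarrow> 'a list set list set
     \<Rightarrow> 'a set list set list set" where
  "quot_quant sim ks Q = {R's. length R's = length ks \<and>
      (\<forall>i<length ks. \<forall>cs\<in>R's ! i. length cs = ks ! i \<and> set cs \<subseteq> quot sim) \<and>
      map (cup_rel sim) R's \<in> Q}"

definition cup_quant :: "('a \<Rightarrow> 'a \<Rightarrow> bool) \<Rightarrow> 'a set list set list set \<Rightarrow> 'a list set list set" where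
  "cup_quant sim Q' = (\<lambda>R's. map (cup_rel sim) R's) ` Q'"

end

theory Submission
  imports Defs
begin


definition fx :: "'v set \<Rightarrow> ('v \<Rightarrow> 'a) \<Rightarrow> ('v \<Rightarrow> 'a) \<Rightarrow> 'v \<Rightarrow> 'a" where
  "fx Y c t = (\<lambda>v. if v \<in> Y then t v else c v)"

fun sub :: "'v set \<Rightarrow> ('v \<Rightarrow> 'a) \<Rightarrow> 'v + 'a \<Rightarrow> 'v + 'a" where
  "sub Y c (Inl v) = (if v \<in> Y then Inl v else Inr (c v))"
| "sub Y c (Inr a) = Inr a"

lemma tval_sub: "tval (fx Y c t) u = tval t (sub Y c u)"
  by (cases u) (auto simp: tval_def fx_def)

lemma tval_sub': "tval (fx Y c t) = tval t \<circ> sub Y c"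
  by (rule ext) (simp add: tval_sub)

lemma upd_fx: "length as = length xs \<Longrightarrow> upd (fx Y c t) xs as = fx (Y \<union> set xs) c (upd t xs as)"
proof
  fix v assume l: "length as = length xs"
  show "upd (fx Y c t) xs as v = fx (Y \<union> set xs) c (upd t xs as) v"
  proof (cases "map_of (zip xs as) v")
    case None
    then have "v \<notin> set xs" using l by simp
    then show ?thesis using None by (simp add: upd_def fx_def)
  next
    case (Some a)
    then have "v \<in> set xs" by (auto dest: map_of_SomeD set_zip_leftD)
    then show ?thesis using Some by (simp add: upd_def fx_def)
  qed
qed

lemma fix_lemma:
  assumes "lformula q A"
  shows "lformula q {t. fx Y c t \<in> A}"
  using assms
proof (induction arbitrary: Y rule: lformula.induct)
  case (atom k R ts)
  have "{t. fx Y c t \<in> {s. map (tval s) ts \<in> R}} = {s. map (tval s) (map (sub Y c) ts) \<in> R}"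
    by (simp add: tval_sub')
  then show ?case using lformula.atom[OF atom(1), of "map (sub Y c) ts"] atom(2) by simp
next
  case (neg A)
  have "{t. fx Y c t \<in> - A} = - {t. fx Y c t \<in> A}" by auto
  then show ?case using lformula.neg[OF neg.IH] by simp
next
  case (conj F)
  have eq: "{t. fx Y c t \<in> \<Inter> F} = \<Inter> ((\<lambda>A. {t. fx Y c t \<in> A}) ` F)" by auto
  show ?case unfolding eq
  proof (rule lformula.conj)
    fix B assume "B \<in> (\<lambda>A. {t. fx Y c t \<in> A}) ` F"
    then obtain A where "A \<in> F" "B = {t. fx Y c t \<in> A}" by blast
    then show "lformula q B" using conj.IH by simp
  qed
next
  case (ex A X)
  have "{t. fx Y c t \<in> {s. \<exists>t. (\<forall>v. v \<notin> X \<longrightarrow> t v = s v) \<and> t \<in> A}}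
      = {s. \<exists>t. (\<forall>v. v \<notin> X \<longrightarrow> t v = s v) \<and> t \<in> {u. fx (Y \<union> X) c u \<in> A}}"
  proof (intro set_eqI iffI)
    fix t assume "t \<in> {t. fx Y c t \<in> {s. \<exists>t. (\<forall>v. v \<notin> X \<longrightarrow> t v = s v) \<and> t \<in> A}}"
    then obtain u where u: "\<forall>v. v \<notin> X \<longrightarrow> u v = fx Y c t v" "u \<in> A" by auto
    define u' where "u' = (\<lambda>v. if v \<in> X then u v else t v)"
    have "fx (Y \<union> X) c u' = u" using u(1) by (auto simp: fx_def u'_def)
    then show "t \<in> {s. \<exists>t. (\<forall>v. v \<notin> X \<longrightarrow> t v = s v) \<and> t \<in> {u. fx (Y \<union> X) c u \<in> A}}"
      using u(2) by (auto simp: u'_def intro!: exI[of _ u'])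
  next
    fix t assume "t \<in> {s. \<exists>t. (\<forall>v. v \<notin> X \<longrightarrow> t v = s v) \<and> t \<in> {u. fx (Y \<union> X) c u \<in> A}}"
    then obtain u where u: "\<forall>v. v \<notin> X \<longrightarrow> u v = t v" "fx (Y \<union> X) c u \<in> A" by auto
    have "\<forall>v. v \<notin> X \<longrightarrow> fx (Y \<union> X) c u v = fx Y c t v" using u(1) by (auto simp: fx_def)
    then show "t \<in> {t. fx Y c t \<in> {s. \<exists>t. (\<forall>v. v \<notin> X \<longrightarrow> t v = s v) \<and> t \<in> A}}"
      using u(2) by auto
  qed
  then show ?case using lformula.ex[OF ex.IH] by simp
next
  case (quant ks Q xss As)
  define As' where "As' = map (\<lambda>i. {u. fx (Y \<union> set (xss ! i)) c u \<in> As ! i}) [0..<length ks]"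
  have eq: "{t. fx Y c t \<in> {s. map (\<lambda>i. {as. length as = ks ! i \<and> upd s (xss ! i) as \<in> As ! i})
                        [0..<length ks] \<in> Q}} =
        {s. map (\<lambda>i. {as. length as = ks ! i \<and> upd s (xss ! i) as \<in> As' ! i})
                        [0..<length ks] \<in> Q}"
  proof -
    have *: "\<And>t i. i < length ks \<Longrightarrow> {as. length as = ks ! i \<and> upd (fx Y c t) (xss ! i) as \<in> As ! i}
       = {as. length as = ks ! i \<and> upd t (xss ! i) as \<in> As' ! i}"
    proof -
      fix t i assume i: "i < length ks"
      have A: "As' ! i = {u. fx (Y \<union> set (xss ! i)) c u \<in> As ! i}" using i by (simp add: As'_def)
      have "\<And>as. length as = ks ! i \<Longrightarrow> upd (fx Y c t) (xss ! i) as = fx (Y \<union> set (xss ! i)) c (upd t (xss ! i) as)"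
        using quant(4)[OF i] by (intro upd_fx) simp
      then show "{as. length as = ks ! i \<and> upd (fx Y c t) (xss ! i) as \<in> As ! i}
       = {as. length as = ks ! i \<and> upd t (xss ! i) as \<in> As' ! i}" unfolding A by auto
    qed
    have "\<And>t. map (\<lambda>i. {as. length as = ks ! i \<and> upd (fx Y c t) (xss ! i) as \<in> As ! i}) [0..<length ks]
       = map (\<lambda>i. {as. length as = ks ! i \<and> upd t (xss ! i) as \<in> As' ! i}) [0..<length ks]"
      by (rule map_cong) (auto simp: *)
    then show ?thesis by (intro set_eqI) (simp only: mem_Collect_eq)
  qed
  show ?case unfolding eq
  proof (rule lformula.quant)
    show "Quant ks Q \<in> q" by (rule quant(1))
    show "length xss = length ks" by (rule quant(2))
    show "length As' = length ks" by (simp add: As'_def)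
    show "\<And>i. i < length ks \<Longrightarrow> distinct (xss ! i) \<and> length (xss ! i) = ks ! i" by (rule quant(4))
    show "\<And>i. i < length ks \<Longrightarrow> lformula q (As' ! i)" by (simp add: As'_def quant.IH)
  qed
qed



lemma tval_ren: "tval (t \<circ> \<pi>) = tval t \<circ> map_sum \<pi> id"
  by (rule ext, rename_tac u, case_tac u) (auto simp: tval_def)

lemma map_of_zip_inj: "inj \<pi> \<Longrightarrow> map_of (zip (map \<pi> xs) as) (\<pi> v) = map_of (zip xs as) v"
proof (induction xs arbitrary: as)
  case Nil then show ?case by simp
next
  case (Cons x xs)
  then show ?case by (cases as) (auto simp: inj_eq)
qed

lemma upd_ren: "inj \<pi> \<Longrightarrow> upd (t \<circ> \<pi>) xs as = upd t (map \<pi> xs) as \<circ> \<pi>"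
  by (rule ext) (simp add: upd_def map_of_zip_inj split: option.split)

lemma ren_lemma:
  assumes "lformula q A" and b: "bij \<pi>"
  shows "lformula q {t. t \<circ> \<pi> \<in> A}"
  using assms(1)
proof (induction rule: lformula.induct)
  case (atom k R ts)
  have "{t. t \<circ> \<pi> \<in> {s. map (tval s) ts \<in> R}} = {s. map (tval s) (map (map_sum \<pi> id) ts) \<in> R}"
    by (simp add: tval_ren)
  moreover have "lformula q {s. map (tval s) (map (map_sum \<pi> id) ts) \<in> R}"
    using lformula.atom[OF atom(1), of "map (map_sum \<pi> id) ts"] atom(2) by simp
  ultimately show ?case by (simp only:)
next
  case (neg A)
  have eq: "{t. t \<circ> \<pi> \<in> - A} = - {t. t \<circ> \<pi> \<in> A}" by auto
  show ?case unfolding eq by (rule lformula.neg[OF neg.IH])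
next
  case (conj F)
  have eq: "{t. t \<circ> \<pi> \<in> \<Inter> F} = \<Inter> ((\<lambda>A. {t. t \<circ> \<pi> \<in> A}) ` F)" by auto
  show ?case unfolding eq
  proof (rule lformula.conj)
    fix B assume "B \<in> (\<lambda>A. {t. t \<circ> \<pi> \<in> A}) ` F"
    then obtain A where "A \<in> F" "B = {t. t \<circ> \<pi> \<in> A}" by blast
    then show "lformula q B" using conj.IH by (simp only:)
  qed
next
  case (ex A X)
  have inj: "inj \<pi>" and sur: "surj \<pi>" using b by (auto simp: bij_def)
  have "{t. t \<circ> \<pi> \<in> {s. \<exists>t. (\<forall>v. v \<notin> X \<longrightarrow> t v = s v) \<and> t \<in> A}}
      = {s. \<exists>t. (\<forall>v. v \<notin> \<pi> ` X \<longrightarrow> t v = s v) \<and> t \<in> {w. w \<circ> \<pi> \<in> A}}"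
  proof (intro set_eqI iffI)
    fix t assume "t \<in> {t. t \<circ> \<pi> \<in> {s. \<exists>t. (\<forall>v. v \<notin> X \<longrightarrow> t v = s v) \<and> t \<in> A}}"
    then obtain u where u: "\<forall>v. v \<notin> X \<longrightarrow> u v = t (\<pi> v)" "u \<in> A" by auto
    define w where "w = u \<circ> inv \<pi>"
    have wp: "w \<circ> \<pi> = u" using inj by (auto simp: w_def)
    have "\<forall>v. v \<notin> \<pi> ` X \<longrightarrow> w v = t v"
    proof (intro allI impI)
      fix v assume "v \<notin> \<pi> ` X"
      moreover have "v = \<pi> (inv \<pi> v)" using sur by (simp add: surj_f_inv_f)
      ultimately have "inv \<pi> v \<notin> X" by auto
      then show "w v = t v" using u(1) \<open>v = \<pi> (inv \<pi> v)\<close> by (simp add: w_def)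
    qed
    then show "t \<in> {s. \<exists>t. (\<forall>v. v \<notin> \<pi> ` X \<longrightarrow> t v = s v) \<and> t \<in> {w. w \<circ> \<pi> \<in> A}}"
      using u(2) wp by auto
  next
    fix t assume "t \<in> {s. \<exists>t. (\<forall>v. v \<notin> \<pi> ` X \<longrightarrow> t v = s v) \<and> t \<in> {w. w \<circ> \<pi> \<in> A}}"
    then obtain w where w: "\<forall>v. v \<notin> \<pi> ` X \<longrightarrow> w v = t v" "w \<circ> \<pi> \<in> A" by auto
    have "\<forall>v. v \<notin> X \<longrightarrow> (w \<circ> \<pi>) v = (t \<circ> \<pi>) v"
      using w(1) inj by (auto simp: inj_image_mem_iff)
    then show "t \<in> {t. t \<circ> \<pi> \<in> {s. \<exists>t. (\<forall>v. v \<notin> X \<longrightarrow> t v = s v) \<and> t \<in> A}}"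
      using w(2) by blast
  qed
  then show ?case using lformula.ex[OF ex.IH] by (simp only:)
next
  case (quant ks Q xss As)
  have inj: "inj \<pi>" using b by (auto simp: bij_def)
  define As' where "As' = map (\<lambda>i. {u. u \<circ> \<pi> \<in> As ! i}) [0..<length ks]"
  define xss' where "xss' = map (map \<pi>) xss"
  have eq: "{t. t \<circ> \<pi> \<in> {s. map (\<lambda>i. {as. length as = ks ! i \<and> upd s (xss ! i) as \<in> As ! i})
                        [0..<length ks] \<in> Q}} =
        {s. map (\<lambda>i. {as. length as = ks ! i \<and> upd s (xss' ! i) as \<in> As' ! i})
                        [0..<length ks] \<in> Q}"
  proof -
    have *: "\<And>t i. i < length ks \<Longrightarrow> {as. length as = ks ! i \<and> upd (t \<circ> \<pi>) (xss ! i) as \<in> As ! i}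
       = {as. length as = ks ! i \<and> upd t (xss' ! i) as \<in> As' ! i}"
    proof -
      fix t i assume i: "i < length ks"
      have A: "As' ! i = {u. u \<circ> \<pi> \<in> As ! i}" using i by (simp add: As'_def)
      have X: "xss' ! i = map \<pi> (xss ! i)" using i quant(2) by (simp add: xss'_def)
      show "{as. length as = ks ! i \<and> upd (t \<circ> \<pi>) (xss ! i) as \<in> As ! i}
       = {as. length as = ks ! i \<and> upd t (xss' ! i) as \<in> As' ! i}" unfolding A X
        by (simp only: upd_ren[OF inj] mem_Collect_eq)
    qed
    have "\<And>t. map (\<lambda>i. {as. length as = ks ! i \<and> upd (t \<circ> \<pi>) (xss ! i) as \<in> As ! i}) [0..<length ks]
       = map (\<lambda>i. {as. length as = ks ! i \<and> upd t (xss' ! i) as \<in> As' ! i}) [0..<length ks]"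
      by (rule map_cong) (auto simp: *)
    then show ?thesis by (intro set_eqI) (simp only: mem_Collect_eq)
  qed
  show ?case unfolding eq
  proof (rule lformula.quant)
    show "Quant ks Q \<in> q" by (rule quant(1))
    show "length xss' = length ks" using quant(2) by (simp add: xss'_def)
    show "length As' = length ks" by (simp add: As'_def)
    show "\<And>i. i < length ks \<Longrightarrow> distinct (xss' ! i) \<and> length (xss' ! i) = ks ! i"
      using quant(2,4) inj by (simp add: xss'_def distinct_map inj_on_subset[OF inj])
    show "\<And>i. i < length ks \<Longrightarrow> lformula q (As' ! i)" by (simp add: As'_def quant.IH)
  qed
qed


lemma lsim_refl: "lsim V q a a"
  by (simp add: lsim_def)
lemma lsim_sym: "lsim V q a b \<Longrightarrow> lsim V q b a"
  by (simp add: lsim_def)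
lemma lsim_trans: "lsim V q a b \<Longrightarrow> lsim V q b c \<Longrightarrow> lsim V q a c"
  unfolding lsim_def by blast

lemma upd_Cons: "upd s (x # xs) (a # as) = (upd s xs as)(x := a)"
  by (rule ext) (simp add: upd_def)

lemma upd_notin: "x \<notin> set xs \<Longrightarrow> length as = length xs \<Longrightarrow> upd (s(x := b)) xs as = (upd s xs as)(x := b)"
  by (rule ext) (auto simp: upd_def split: option.split dest: map_of_SomeD set_zip_leftD)

lemma upd_nth: "distinct xs \<Longrightarrow> length bs = length xs \<Longrightarrow> i < length xs \<Longrightarrow> upd s xs bs (xs ! i) = bs ! i"
  by (simp add: upd_def map_of_zip_nth)

lemma inv_upd:
  fixes A :: "('v \<Rightarrow> 'a) set" and V :: "'v itself"
  assumes "lformula q A"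
  shows "distinct xs \<Longrightarrow> length as = length xs \<Longrightarrow> list_all2 (lsim V q) as bs \<Longrightarrow>
    (upd s xs as \<in> A \<longleftrightarrow> upd s xs bs \<in> A)"
proof (induction xs arbitrary: as bs s)
  case Nil then show ?case by simp
next
  case (Cons x xs)
  obtain a as' where as: "as = a # as'" using Cons.prems(2) by (cases as) auto
  obtain b bs' where bs: "bs = b # bs'" "lsim V q a b" "list_all2 (lsim V q) as' bs'"
    using Cons.prems(3) as by (cases bs) auto
  have l: "length as' = length xs" "length bs' = length xs" using Cons.prems(2) as bs(3)
    by (auto dest: list_all2_lengthD)
  have "upd s (x # xs) as \<in> A \<longleftrightarrow> (upd s xs as')(x := a) \<in> A" by (simp add: as upd_Cons)
  also have "\<dots> \<longleftrightarrow> (upd s xs as')(x := b) \<in> A"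
    using bs(2) assms unfolding lsim_def by blast
  also have "\<dots> \<longleftrightarrow> upd (s(x := b)) xs as' \<in> A" using Cons.prems(1) l by (simp add: upd_notin)
  also have "\<dots> \<longleftrightarrow> upd (s(x := b)) xs bs' \<in> A"
    using Cons.prems(1) by (intro Cons.IH l(1) bs(3)) simp
  also have "\<dots> \<longleftrightarrow> upd s (x # xs) bs \<in> A" using Cons.prems(1) l by (simp add: upd_notin bs upd_Cons)
  finally show ?case .
qed

lemma sep:
  fixes V :: "'v itself" and x :: 'v
  assumes "\<not> lsim V q a b"
  shows "\<exists>P. lformula q {t::'v \<Rightarrow> 'a. P (t x)} \<and> P a \<and> \<not> P b"
proof -
  obtain A :: "('v \<Rightarrow> 'a) set" and s y where A: "lformula q A" "\<not> (s(y := a) \<in> A \<longleftrightarrow> s(y := b) \<in> A)"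
    using assms unfolding lsim_def by blast
  define \<pi> where "\<pi> = (\<lambda>v. if v = x then y else if v = y then x else v)"
  have pp: "\<pi> \<circ> \<pi> = id" by (rule ext) (simp add: \<pi>_def)
  then have "bij \<pi>" using o_bij by blast
  then have A': "lformula q {t. t \<circ> \<pi> \<in> A}" by (rule ren_lemma[OF A(1)])
  have B: "lformula q {t. fx {x} (s \<circ> \<pi>) t \<in> {t. t \<circ> \<pi> \<in> A}}" by (rule fix_lemma[OF A'])
  have "\<And>t. fx {x} (s \<circ> \<pi>) t \<circ> \<pi> = s(y := t x)"
    by (rule ext) (auto simp: fx_def \<pi>_def)
  then have "{t. fx {x} (s \<circ> \<pi>) t \<in> {t. t \<circ> \<pi> \<in> A}} = {t. (\<lambda>z. s(y := z) \<in> A) (t x)}" by simp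
  with B have B': "lformula q {t. (\<lambda>z. s(y := z) \<in> A) (t x)}" by simp
  show ?thesis
  proof (cases "s(y := a) \<in> A")
    case True then show ?thesis using B' A(2) by (intro exI[of _ "\<lambda>z. s(y := z) \<in> A"]) auto
  next
    case False
    have "lformula q (- {t. (\<lambda>z. s(y := z) \<in> A) (t x)})" by (rule lformula.neg[OF B'])
    moreover have "- {t. (\<lambda>z. s(y := z) \<in> A) (t x)} = {t. (\<lambda>z. s(y := z) \<notin> A) (t x)}" by auto
    ultimately show ?thesis using False A(2) by (intro exI[of _ "\<lambda>z. s(y := z) \<notin> A"]) auto
  qed
qed

lemma class_def:
  fixes V :: "'v itself" and x :: 'v
  shows "lformula q {t::'v \<Rightarrow> 'a. lsim V q a (t x)}"
proof -
  have "\<forall>b. \<exists>P. \<not> lsim V q a b \<longrightarrow> lformula q {t::'v \<Rightarrow> 'a. P (t x)} \<and> P a \<and> \<not> P b"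
    using sep[of V q a _ x] by blast
  then obtain PP where PP: "\<And>b. \<not> lsim V q a b \<Longrightarrow> lformula q {t::'v \<Rightarrow> 'a. PP b (t x)} \<and> PP b a \<and> \<not> PP b b"
    by metis
  have eq: "{t::'v \<Rightarrow> 'a. lsim V q a (t x)} = \<Inter> ((\<lambda>b. {t. PP b (t x)}) ` {b. \<not> lsim V q a b})"
  proof (intro set_eqI iffI)
    fix t :: "'v \<Rightarrow> 'a" assume "t \<in> {t. lsim V q a (t x)}"
    then have st: "lsim V q a (t x)" by simp
    show "t \<in> \<Inter> ((\<lambda>b. {t. PP b (t x)}) ` {b. \<not> lsim V q a b})"
    proof (clarsimp)
      fix b assume nb: "\<not> lsim V q a b"
      have "t(x := a) \<in> {t. PP b (t x)} \<longleftrightarrow> t(x := t x) \<in> {t. PP b (t x)}"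
        using st PP[OF nb] unfolding lsim_def by blast
      then show "PP b (t x)" using PP[OF nb] by simp
    qed
  next
    fix t :: "'v \<Rightarrow> 'a" assume h: "t \<in> \<Inter> ((\<lambda>b. {t. PP b (t x)}) ` {b. \<not> lsim V q a b})"
    show "t \<in> {t. lsim V q a (t x)}"
    proof (rule ccontr)
      assume "t \<notin> {t. lsim V q a (t x)}"
      then have n: "\<not> lsim V q a (t x)" by simp
      then have "PP (t x) (t x)" using h by blast
      then show False using PP[OF n] by simp
    qed
  qed
  show ?thesis unfolding eq
  proof (rule lformula.conj)
    fix B assume "B \<in> (\<lambda>b. {t::'v \<Rightarrow> 'a. PP b (t x)}) ` {b. \<not> lsim V q a b}"
    then obtain b where nb: "\<not> lsim V q a b" and B: "B = {t. PP b (t x)}" by blast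
    show "lformula q B" unfolding B using PP[OF nb] by (rule conjunct1)
  qed
qed

lemma part1:
  fixes q :: "'a oper set" and V :: "'v itself"
  assumes inf: "infinite (UNIV :: 'v set)" and len: "\<forall>t\<in>R. length t = k"
  shows "ldefinable V q k R \<longleftrightarrow> invariant (lsim V q) k R"
proof
  assume "ldefinable V q k R"
  then obtain A :: "('v \<Rightarrow> 'a) set" and xs s where d: "lformula q A" "distinct xs" "length xs = k"
    "R = {as. length as = k \<and> upd s xs as \<in> A}" unfolding ldefinable_def by blast
  show "invariant (lsim V q) k R"
    unfolding invariant_def
  proof (intro allI impI)
    fix as bs :: "'a list" assume l: "length as = k" and r: "list_all2 (lsim V q) as bs"
    have "length bs = k" using l r by (auto dest: list_all2_lengthD)
    then show "as \<in> R \<longleftrightarrow> bs \<in> R"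
      using inv_upd[OF d(1), of xs as V bs s] d l r by simp
  qed
next
  assume inv: "invariant (lsim V q) k R"
  obtain S :: "'v set" where S: "finite S" "card S = k" using infinite_arbitrarily_large[OF inf] by blast
  obtain xs where xs: "set xs = S" "distinct xs" using finite_distinct_list[OF S(1)] by blast
  have lxs: "length xs = k" using xs S(2) distinct_card by metis
  define D :: "('v \<Rightarrow> 'a) set" where
    "D = - \<Inter> ((\<lambda>as. - \<Inter> ((\<lambda>i. {t. lsim V q (as ! i) (t (xs ! i))}) ` {..<k})) ` R)"
  have "lformula q D" unfolding D_def
  proof (intro lformula.neg lformula.conj)
    fix B assume "B \<in> (\<lambda>as. - \<Inter> ((\<lambda>i. {t::'v\<Rightarrow>'a. lsim V q (as ! i) (t (xs ! i))}) ` {..<k})) ` R"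
    then obtain as where B: "B = - \<Inter> ((\<lambda>i. {t::'v\<Rightarrow>'a. lsim V q (as ! i) (t (xs ! i))}) ` {..<k})" by blast
    show "lformula q B" unfolding B
    proof (intro lformula.neg lformula.conj)
      fix C assume "C \<in> (\<lambda>i. {t::'v\<Rightarrow>'a. lsim V q (as ! i) (t (xs ! i))}) ` {..<k}"
      then obtain i where "C = {t::'v\<Rightarrow>'a. lsim V q (as ! i) (t (xs ! i))}" by blast
      then show "lformula q C" using class_def[where V=V and q=q and a="as ! i" and x="xs ! i"] by simp
    qed
  qed
  moreover have "R = {bs. length bs = k \<and> upd undefined xs bs \<in> D}"
  proof (intro set_eqI iffI)
    fix bs assume bR: "bs \<in> R"
    have lb: "length bs = k" using len bR by blast
    have "\<forall>i<k. lsim V q (bs ! i) (upd undefined xs bs (xs ! i))"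
    proof (intro allI impI)
      fix i assume "i < k"
      then have "upd undefined xs bs (xs ! i) = bs ! i" using upd_nth[OF xs(2)] lb lxs by simp
      then show "lsim V q (bs ! i) (upd undefined xs bs (xs ! i))" by (simp add: lsim_refl)
    qed
    then show "bs \<in> {bs. length bs = k \<and> upd undefined xs bs \<in> D}"
      using lb bR unfolding D_def by blast
  next
    fix bs assume "bs \<in> {bs. length bs = k \<and> upd undefined xs bs \<in> D}"
    then have lb: "length bs = k" and "upd undefined xs bs \<in> D" by auto
    then obtain as where aR: "as \<in> R" and h: "\<forall>i<k. lsim V q (as ! i) (upd undefined xs bs (xs ! i))"
      unfolding D_def by blast
    have la: "length as = k" using len aR by blast
    have "\<forall>i<k. lsim V q (as ! i) (bs ! i)"
    proof (intro allI impI)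
      fix i assume i: "i < k"
      then have "upd undefined xs bs (xs ! i) = bs ! i" using upd_nth[OF xs(2)] lb lxs by simp
      then show "lsim V q (as ! i) (bs ! i)" using h i by metis
    qed
    then have "list_all2 (lsim V q) as bs" using la lb by (simp add: list_all2_conv_all_nth)
    then show "bs \<in> R" using inv aR la unfolding invariant_def by blast
  qed
  ultimately show "ldefinable V q k R" unfolding ldefinable_def using xs(2) lxs by blast
qed

lemma cls_eq: "cls (lsim V q) a = cls (lsim V q) b \<longleftrightarrow> lsim V q a b"
proof
  assume "cls (lsim V q) a = cls (lsim V q) b"
  then have "b \<in> cls (lsim V q) a" by (simp add: cls_def lsim_refl)
  then show "lsim V q a b" by (simp add: cls_def)
next
  assume "lsim V q a b"
  then show "cls (lsim V q) a = cls (lsim V q) b"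
    unfolding cls_def by (auto intro: lsim_trans lsim_sym)
qed

lemma map_cls_eq: "map (cls (lsim V q)) as = map (cls (lsim V q)) bs \<longleftrightarrow> list_all2 (lsim V q) as bs"
proof -
  have "map (cls (lsim V q)) as = map (cls (lsim V q)) bs \<longleftrightarrow>
     list_all2 (=) (map (cls (lsim V q)) as) (map (cls (lsim V q)) bs)" by (simp add: list.rel_eq)
  also have "\<dots> \<longleftrightarrow> list_all2 (\<lambda>a b. cls (lsim V q) a = cls (lsim V q) b) as bs"
    by (simp add: list.rel_map)
  also have "\<dots> \<longleftrightarrow> list_all2 (lsim V q) as bs" by (simp add: cls_eq)
  finally show ?thesis .
qed

lemma cup_image:
  assumes "invariant (lsim V q) k R" "\<forall>t\<in>R. length t = k"
  shows "cup_rel (lsim V q) (map (cls (lsim V q)) ` R) = R"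
proof (intro set_eqI iffI)
  fix as assume "as \<in> cup_rel (lsim V q) (map (cls (lsim V q)) ` R)"
  then obtain r where r: "r \<in> R" "map (cls (lsim V q)) as = map (cls (lsim V q)) r"
    by (auto simp: cup_rel_def)
  then have "list_all2 (lsim V q) r as" by (metis map_cls_eq)
  then show "as \<in> R" using assms r(1) unfolding invariant_def by blast
next
  fix as assume "as \<in> R" then show "as \<in> cup_rel (lsim V q) (map (cls (lsim V q)) ` R)"
    by (auto simp: cup_rel_def)
qed

lemma cup_inv: "invariant (lsim V q) k (cup_rel (lsim V q) R')"
  unfolding invariant_def cup_rel_def by (auto simp: map_cls_eq[symmetric])

theorem proposition12:
  fixes q :: "'a oper set" and V :: "'v itself"
  assumes "infinite (UNIV :: 'v set)"
  shows "(\<forall>k (R :: 'a list set). (\<forall>t\<in>R. length t = k) \<longrightarrow>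
            (ldefinable V q k R \<longleftrightarrow> invariant (lsim V q) k R))
       \<and> (\<forall>ks (Q :: 'a list set list set). is_quant ks Q \<longrightarrow>
            restrict_def V q ks Q = cup_quant (lsim V q) (quot_quant (lsim V q) ks Q))"
proof (intro conjI allI impI)
  fix k and R :: "'a list set" assume "\<forall>t\<in>R. length t = k"
  then show "ldefinable V q k R \<longleftrightarrow> invariant (lsim V q) k R" using part1[OF assms] by blast
next
  fix ks and Q :: "'a list set list set" assume iq: "is_quant ks Q"
  show "restrict_def V q ks Q = cup_quant (lsim V q) (quot_quant (lsim V q) ks Q)"
  proof (intro set_eqI iffI)
    fix Rs assume "Rs \<in> restrict_def V q ks Q"
    then have RQ: "Rs \<in> Q" and dfn: "\<forall>i<length ks. ldefinable V q (ks ! i) (Rs ! i)"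
      by (auto simp: restrict_def_def)
    have lRs: "length Rs = length ks" and lens: "\<forall>i<length ks. \<forall>t\<in>Rs ! i. length t = ks ! i"
      using iq RQ by (auto simp: is_quant_def)
    have inv: "\<forall>i<length ks. invariant (lsim V q) (ks ! i) (Rs ! i)"
      using dfn lens part1[OF assms] by blast
    define R's where "R's = map (\<lambda>R. map (cls (lsim V q)) ` R) Rs"
    have m: "map (cup_rel (lsim V q)) R's = Rs"
      unfolding R's_def
    proof (rule nth_equalityI)
      show "length (map (cup_rel (lsim V q)) (map (\<lambda>R. map (cls (lsim V q)) ` R) Rs)) = length Rs" by simp
      fix i assume "i < length (map (cup_rel (lsim V q)) (map (\<lambda>R. map (cls (lsim V q)) ` R) Rs))"
      then have i: "i < length ks" using lRs by simp
      have "cup_rel (lsim V q) (map (cls (lsim V q)) ` (Rs ! i)) = Rs ! i"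
        using inv i lens by (intro cup_image) auto
      then show "map (cup_rel (lsim V q)) (map (\<lambda>R. map (cls (lsim V q)) ` R) Rs) ! i = Rs ! i"
        using i lRs by simp
    qed
    have "R's \<in> quot_quant (lsim V q) ks Q"
      unfolding quot_quant_def
    proof (intro CollectI conjI allI impI ballI)
      show "length R's = length ks" by (simp add: R's_def lRs)
      show "map (cup_rel (lsim V q)) R's \<in> Q" using m RQ by simp
    next
      fix i cs assume i: "i < length ks" and cs: "cs \<in> R's ! i"
      then obtain r where r: "r \<in> Rs ! i" "cs = map (cls (lsim V q)) r" by (auto simp: R's_def lRs)
      show "length cs = ks ! i" using r lens i by simp
      show "set cs \<subseteq> quot (lsim V q)" using r by (auto simp: quot_def)
    qed
    then show "Rs \<in> cup_quant (lsim V q) (quot_quant (lsim V q) ks Q)"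
      unfolding cup_quant_def using m by force
  next
    fix Rs assume "Rs \<in> cup_quant (lsim V q) (quot_quant (lsim V q) ks Q)"
    then obtain R's where R's: "R's \<in> quot_quant (lsim V q) ks Q" and Rs: "Rs = map (cup_rel (lsim V q)) R's"
      by (auto simp: cup_quant_def)
    have lR: "length R's = length ks" and cl: "\<forall>i<length ks. \<forall>cs\<in>R's ! i. length cs = ks ! i"
      and inQ: "map (cup_rel (lsim V q)) R's \<in> Q"
      using R's by (auto simp: quot_quant_def)
    have "\<forall>i<length ks. ldefinable V q (ks ! i) (Rs ! i)"
    proof (intro allI impI)
      fix i assume i: "i < length ks"
      have e: "Rs ! i = cup_rel (lsim V q) (R's ! i)" using Rs i lR by simp
      have "\<forall>t\<in>Rs ! i. length t = ks ! i"
      proof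
        fix t assume "t \<in> Rs ! i"
        then have "map (cls (lsim V q)) t \<in> R's ! i" by (simp add: e cup_rel_def)
        then show "length t = ks ! i" using cl i by fastforce
      qed
      then show "ldefinable V q (ks ! i) (Rs ! i)" using part1[OF assms] cup_inv e by metis
    qed
    then show "Rs \<in> restrict_def V q ks Q" using inQ Rs by (simp add: restrict_def_def)
  qed
qed

end
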